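(* Let $\mathcal M$ be a right Hilbert $C^*$-module over a $C^*$-algebra $A$, let $\mathbb K(\mathcal M)$ be the $C^*$-algebra of compact operators on $\mathcal M$, and let $\mathcal N \subset \mathcal M$ be a closed submodule. Put $J_{\mathcal N} = \{ T \in \mathbb K(\mathcal M) \mid \operatorname{Ran} T \subset \mathcal N \}$, a closed right ideal of $\mathbb K(\mathcal M)$. Then $\mathcal N$ is topologically essential in $\mathcal M$ if and only if $J_{\mathcal N}$ is a topologically essential right ideal of $\mathbb K(\mathcal M)$.
   Context: $\mathbb K(\mathcal M)$ denotes the norm closure of the linear span of the operators $\Theta_{x,y}(z) = x\langle y, z\rangle$, $x,y \in \mathcal M$. A closed submodule $\mathcal N$ of a Hilbert $A$-module $\mathcal M$ is topologically essential if for every nonzero closed submodule $\mathcal K \subset \mathcal M$ one has $\mathcal N \cap \mathcal K \neq \{0\}$. A closed right ideal $J$ of a $C^*$-algebra $B$ is topologically essential if for every nonzero closed right ideal $K \subset B$ one has $J \cap K \neq \{0\}$ (i.e. the module definition applied to $B$ as a right Hilbert module over itself). *)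

theory Defs
  imports "HOL-Analysis.Analysis"
begin

definition complex_scalar :: "(complex \<Rightarrow> 'v::real_vector \<Rightarrow> 'v) \<Rightarrow> bool" where
  "complex_scalar sc \<longleftrightarrow>
     (\<forall>r x. sc (complex_of_real r) x = r *\<^sub>R x) \<and>
     (\<forall>c d x. sc (c * d) x = sc c (sc d x)) \<and>
     (\<forall>c d x. sc (c + d) x = sc c x + sc d x) \<and>
     (\<forall>c x y. sc c (x + y) = sc c x + sc c y)"

text \<open>A (not necessarily unital) C*-algebra: a real Banach algebra with a compatible
  complex scalar multiplication and an involution satisfying the C*-identity.\<close>
definition cstar_algebra ::
  "(complex \<Rightarrow> 'a::{real_normed_algebra,banach} \<Rightarrow> 'a) \<Rightarrow> ('a \<Rightarrow> 'a) \<Rightarrow> bool" where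
  "cstar_algebra sc st \<longleftrightarrow>
     complex_scalar sc \<and>
     (\<forall>c x y. sc c (x * y) = sc c x * y \<and> sc c (x * y) = x * sc c y) \<and>
     (\<forall>c x. norm (sc c x) = cmod c * norm x) \<and>
     (\<forall>x. st (st x) = x) \<and>
     (\<forall>x y. st (x + y) = st x + st y) \<and>
     (\<forall>c x. st (sc c x) = sc (cnj c) (st x)) \<and>
     (\<forall>x y. st (x * y) = st y * st x) \<and>
     (\<forall>x. norm (st x * x) = (norm x)\<^sup>2)"

definition cstar_positive :: "('a::{real_normed_algebra} \<Rightarrow> 'a) \<Rightarrow> 'a \<Rightarrow> bool" where
  "cstar_positive st a \<longleftrightarrow> (\<exists>b. a = st b * b)"

text \<open>Right Hilbert C*-module: scM complex scalars on M, rm right A-action, ip the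
  A-valued inner product (linear in the second variable); the norm of M is the one
  induced by the inner product, and M is complete.\<close>
definition hilbert_module ::
  "(complex \<Rightarrow> 'a::{real_normed_algebra,banach} \<Rightarrow> 'a) \<Rightarrow> ('a \<Rightarrow> 'a)
   \<Rightarrow> (complex \<Rightarrow> 'm::banach \<Rightarrow> 'm) \<Rightarrow> ('m \<Rightarrow> 'a \<Rightarrow> 'm) \<Rightarrow> ('m \<Rightarrow> 'm \<Rightarrow> 'a) \<Rightarrow> bool" where
  "hilbert_module sc st scM rm ip \<longleftrightarrow>
     cstar_algebra sc st \<and> complex_scalar scM \<and>
     (\<forall>x y a. rm (x + y) a = rm x a + rm y a) \<and>
     (\<forall>x a b. rm x (a + b) = rm x a + rm x b) \<and>
     (\<forall>x a b. rm x (a * b) = rm (rm x a) b) \<and>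
     (\<forall>c x a. rm (scM c x) a = scM c (rm x a) \<and> rm x (sc c a) = scM c (rm x a)) \<and>
     (\<forall>x y z. ip x (y + z) = ip x y + ip x z) \<and>
     (\<forall>c x y. ip x (scM c y) = sc c (ip x y)) \<and>
     (\<forall>x y a. ip x (rm y a) = ip x y * a) \<and>
     (\<forall>x y. ip y x = st (ip x y)) \<and>
     (\<forall>x. cstar_positive st (ip x x)) \<and>
     (\<forall>x. ip x x = 0 \<longrightarrow> x = 0) \<and>
     (\<forall>x. norm x = sqrt (norm (ip x x)))"

definition closed_submodule ::
  "(complex \<Rightarrow> 'm::real_normed_vector \<Rightarrow> 'm) \<Rightarrow> ('m \<Rightarrow> 'a \<Rightarrow> 'm) \<Rightarrow> 'm set \<Rightarrow> bool" where
  "closed_submodule scM rm N \<longleftrightarrow>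
     closed N \<and> 0 \<in> N \<and> (\<forall>x\<in>N. \<forall>y\<in>N. x + y \<in> N) \<and>
     (\<forall>c. \<forall>x\<in>N. scM c x \<in> N) \<and> (\<forall>x\<in>N. \<forall>a. rm x a \<in> N)"

definition top_essential_submodule ::
  "(complex \<Rightarrow> 'm::real_normed_vector \<Rightarrow> 'm) \<Rightarrow> ('m \<Rightarrow> 'a \<Rightarrow> 'm) \<Rightarrow> 'm set \<Rightarrow> bool" where
  "top_essential_submodule scM rm N \<longleftrightarrow>
     (\<forall>K. closed_submodule scM rm K \<and> K \<noteq> {0} \<longrightarrow> N \<inter> K \<noteq> {0})"

definition opdist_le :: "('m::real_normed_vector \<Rightarrow> 'm) \<Rightarrow> ('m \<Rightarrow> 'm) \<Rightarrow> real \<Rightarrow> bool" where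
  "opdist_le T S e \<longleftrightarrow> (\<forall>z. norm (T z - S z) \<le> e * norm z)"

definition theta_span ::
  "(complex \<Rightarrow> 'm::real_normed_vector \<Rightarrow> 'm) \<Rightarrow> ('m \<Rightarrow> 'a \<Rightarrow> 'm) \<Rightarrow> ('m \<Rightarrow> 'm \<Rightarrow> 'a)
   \<Rightarrow> ('m \<Rightarrow> 'm) set" where
  "theta_span scM rm ip =
     {F. \<exists>(n::nat) c x y. F = (\<lambda>z. \<Sum>i<n. scM (c i) (rm (x i) (ip (y i) z)))}"

text \<open>K(M): the norm closure of theta_span (in operator norm).\<close>
definition compact_ops ::
  "(complex \<Rightarrow> 'm::real_normed_vector \<Rightarrow> 'm) \<Rightarrow> ('m \<Rightarrow> 'a \<Rightarrow> 'm) \<Rightarrow> ('m \<Rightarrow> 'm \<Rightarrow> 'a)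
   \<Rightarrow> ('m \<Rightarrow> 'm) set" where
  "compact_ops scM rm ip =
     {T. \<forall>e>0. \<exists>F\<in>theta_span scM rm ip. opdist_le T F e}"

text \<open>Closed right ideals of K(M) (= closed submodules of K(M) as a right module over itself);
  multiplication in K(M) is composition.\<close>
definition closed_right_ideal ::
  "(complex \<Rightarrow> 'm::real_normed_vector \<Rightarrow> 'm) \<Rightarrow> ('m \<Rightarrow> 'a \<Rightarrow> 'm) \<Rightarrow> ('m \<Rightarrow> 'm \<Rightarrow> 'a)
   \<Rightarrow> ('m \<Rightarrow> 'm) set \<Rightarrow> bool" where
  "closed_right_ideal scM rm ip K \<longleftrightarrow>
     K \<subseteq> compact_ops scM rm ip \<and>
     (\<lambda>_. 0) \<in> K \<and>
     (\<forall>T\<in>K. \<forall>S\<in>K. (\<lambda>z. T z + S z) \<in> K) \<and>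
     (\<forall>c. \<forall>T\<in>K. (\<lambda>z. scM c (T z)) \<in> K) \<and>
     (\<forall>T\<in>K. \<forall>S\<in>compact_ops scM rm ip. T \<circ> S \<in> K) \<and>
     (\<forall>T\<in>compact_ops scM rm ip. (\<forall>e>0. \<exists>S\<in>K. opdist_le T S e) \<longrightarrow> T \<in> K)"

definition top_essential_right_ideal ::
  "(complex \<Rightarrow> 'm::real_normed_vector \<Rightarrow> 'm) \<Rightarrow> ('m \<Rightarrow> 'a \<Rightarrow> 'm) \<Rightarrow> ('m \<Rightarrow> 'm \<Rightarrow> 'a)
   \<Rightarrow> ('m \<Rightarrow> 'm) set \<Rightarrow> bool" where
  "top_essential_right_ideal scM rm ip J \<longleftrightarrow>
     (\<forall>K. closed_right_ideal scM rm ip K \<and> K \<noteq> {\<lambda>_. 0} \<longrightarrow> J \<inter> K \<noteq> {\<lambda>_. 0})"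

definition J_of ::
  "(complex \<Rightarrow> 'm::real_normed_vector \<Rightarrow> 'm) \<Rightarrow> ('m \<Rightarrow> 'a \<Rightarrow> 'm) \<Rightarrow> ('m \<Rightarrow> 'm \<Rightarrow> 'a)
   \<Rightarrow> 'm set \<Rightarrow> ('m \<Rightarrow> 'm) set" where
  "J_of scM rm ip N = {T \<in> compact_ops scM rm ip. range T \<subseteq> N}"

end

theory Submission imports Defs begin

lemma sum_split_nat: "(\<Sum>i<n+m. f i) = (\<Sum>i<(n::nat). f i) + (\<Sum>i<(m::nat). f (n+i))" for f :: "nat \<Rightarrow> 'b::comm_monoid_add"
  by (induction m) (simp_all add: add.assoc)

lemma small_zero:
  fixes u :: "'v::real_normed_vector"
  assumes "\<And>e. e > 0 \<Longrightarrow> norm u \<le> e * C"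
  shows "u = 0"
proof (rule ccontr)
  assume "u \<noteq> 0"
  then have nu: "norm u > 0" by simp
  show False
  proof (cases "C > 0")
    case True
    have "norm u \<le> (norm u / (2*C)) * C" using assms[of "norm u / (2*C)"] nu True by simp
    also have "\<dots> = norm u / 2" using True by simp
    finally show False using nu by simp
  next
    case False
    have "norm u \<le> 1 * C" using assms[of 1] by simp
    then show False using False nu by simp
  qed
qed

locale hm =
  fixes sc :: "complex \<Rightarrow> 'a::{real_normed_algebra,banach} \<Rightarrow> 'a"
    and st :: "'a \<Rightarrow> 'a"
    and scM :: "complex \<Rightarrow> 'm::banach \<Rightarrow> 'm"
    and rm :: "'m \<Rightarrow> 'a \<Rightarrow> 'm"
    and ip :: "'m \<Rightarrow> 'm \<Rightarrow> 'a"
  assumes H: "hilbert_module sc st scM rm ip"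
begin

lemma sc_real: "sc (complex_of_real r) x = r *\<^sub>R x" using H unfolding hilbert_module_def cstar_algebra_def complex_scalar_def by meson
lemma sc_mult: "sc (c * d) x = sc c (sc d x)" using H unfolding hilbert_module_def cstar_algebra_def complex_scalar_def by meson
lemma sc_add: "sc c (x + y) = sc c x + sc c y" using H unfolding hilbert_module_def cstar_algebra_def complex_scalar_def by meson
lemma sc_norm: "norm (sc c x) = cmod c * norm x" using H unfolding hilbert_module_def cstar_algebra_def by meson
lemma st_st: "st (st x) = x" using H unfolding hilbert_module_def cstar_algebra_def by meson
lemma st_add: "st (x + y) = st x + st y" using H unfolding hilbert_module_def cstar_algebra_def by meson
lemma st_sc: "st (sc c x) = sc (cnj c) (st x)" using H unfolding hilbert_module_def cstar_algebra_def by meson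
lemma st_mult: "st (x * y) = st y * st x" using H unfolding hilbert_module_def cstar_algebra_def by meson
lemma cstar: "norm (st x * x) = (norm x)\<^sup>2" using H unfolding hilbert_module_def cstar_algebra_def by meson
lemma scM_real: "scM (complex_of_real r) x = r *\<^sub>R x" using H unfolding hilbert_module_def complex_scalar_def by meson
lemma scM_mult: "scM (c * d) x = scM c (scM d x)" using H unfolding hilbert_module_def complex_scalar_def by meson
lemma scM_add: "scM c (x + y) = scM c x + scM c y" using H unfolding hilbert_module_def complex_scalar_def by meson
lemma rm_add1: "rm (x + y) a = rm x a + rm y a" using H unfolding hilbert_module_def by meson
lemma rm_add2: "rm x (a + b) = rm x a + rm x b" using H unfolding hilbert_module_def by meson
lemma rm_mult: "rm x (a * b) = rm (rm x a) b" using H unfolding hilbert_module_def by meson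
lemma rm_scM: "rm (scM c x) a = scM c (rm x a)" using H unfolding hilbert_module_def by meson
lemma rm_sc: "rm x (sc c a) = scM c (rm x a)" using H unfolding hilbert_module_def by meson
lemma ip_add: "ip x (y + z) = ip x y + ip x z" using H unfolding hilbert_module_def by meson
lemma ip_scM: "ip x (scM c y) = sc c (ip x y)" using H unfolding hilbert_module_def by meson
lemma ip_rm: "ip x (rm y a) = ip x y * a" using H unfolding hilbert_module_def by meson
lemma ip_sym: "ip y x = st (ip x y)" using H unfolding hilbert_module_def by meson
lemma ip_zero: "ip x x = 0 \<Longrightarrow> x = 0" using H unfolding hilbert_module_def by meson
lemma norm_def': "norm x = sqrt (norm (ip x x))" using H unfolding hilbert_module_def by meson

lemma sc_zero: "sc c 0 = 0" using sc_add[of c 0 0] by simp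
lemma sc_minus: "sc c (- x) = - sc c x" using sc_add[of c x "-x"] by (simp add: sc_zero) (metis minus_unique)
lemma sc_diff: "sc c (x - y) = sc c x - sc c y" using sc_add[of c x "-y"] by (simp add: sc_minus)
lemma st_zero: "st 0 = 0" using st_add[of 0 0] by simp
lemma st_minus: "st (- x) = - st x" using st_add[of x "-x"] by (simp add: st_zero) (metis minus_unique)
lemma st_diff: "st (x - y) = st x - st y" using st_add[of x "-y"] by (simp add: st_minus)
lemma scM_zero: "scM c 0 = 0" using scM_add[of c 0 0] by simp
lemma scM_minus: "scM c (- x) = - scM c x" using scM_add[of c x "-x"] by (simp add: scM_zero) (metis minus_unique)
lemma scM_diff: "scM c (x - y) = scM c x - scM c y" using scM_add[of c x "-y"] by (simp add: scM_minus)
lemma scM_one: "scM 1 x = x" using scM_real[of 1 x] by simp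
lemma rm_zero1: "rm 0 a = 0" using rm_add1[of 0 0 a] by simp
lemma rm_minus1: "rm (- x) a = - rm x a" using rm_add1[of x "-x" a] by (simp add: rm_zero1) (metis minus_unique)
lemma rm_diff1: "rm (x - y) a = rm x a - rm y a" using rm_add1[of x "-y" a] by (simp add: rm_minus1)
lemma rm_zero2: "rm x 0 = 0" using rm_add2[of x 0 0] by simp
lemma ip_zero2: "ip x 0 = 0" using ip_add[of x 0 0] by simp
lemma ip_minus2: "ip x (- y) = - ip x y" using ip_add[of x y "-y"] by (simp add: ip_zero2) (metis minus_unique)
lemma ip_diff2: "ip x (y - z) = ip x y - ip x z" using ip_add[of x y "-z"] by (simp add: ip_minus2)
lemma ip_add1: "ip (x + y) z = ip x z + ip y z"
  by (metis ip_sym ip_add st_add)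
lemma ip_zero1: "ip 0 x = 0" using ip_add1[of 0 0 x] by simp
lemma ip_minus1: "ip (- x) y = - ip x y" using ip_add1[of x "-x" y] by (simp add: ip_zero1) (metis minus_unique)
lemma ip_diff1: "ip (x - y) z = ip x z - ip y z" using ip_add1[of x "-y" z] by (simp add: ip_minus1)
lemma ip_scM1: "ip (scM c x) y = sc (cnj c) (ip x y)"
  by (metis ip_sym ip_scM st_sc)
lemma ip_rm1: "ip (rm x a) y = st a * ip x y"
  by (metis ip_sym ip_rm st_mult st_st)
lemma ip_self_adj: "st (ip x x) = ip x x" using ip_sym[of x x] by simp
lemma norm_ip: "norm (ip x x) = (norm x)\<^sup>2" using norm_def'[of x] by simp
lemma ip_scaleR2: "ip x (r *\<^sub>R y) = r *\<^sub>R ip x y"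
  by (metis ip_scM sc_real scM_real)
lemma ip_scaleR1: "ip (r *\<^sub>R x) y = r *\<^sub>R ip x y"
  by (metis ip_scM1 sc_real scM_real complex_cnj_complex_of_real)

lemma norm_st: "norm (st a) = norm a"
proof -
  have le: "norm b \<le> norm (st b)" for b
  proof (cases "b = 0")
    case False
    have "(norm b)\<^sup>2 \<le> norm (st b) * norm b" using cstar[of b] norm_mult_ineq[of "st b" b] by simp
    then show ?thesis using False by (simp add: power2_eq_square)
  qed (simp add: st_zero)
  show ?thesis using le[of a] le[of "st a"] st_st[of a] by simp
qed

lemma norm_rm: "norm (rm x a) \<le> norm x * norm a"
proof -
  have "ip (rm x a) (rm x a) = st a * ip x x * a" by (simp add: ip_rm ip_rm1 mult.assoc)
  then have "norm (ip (rm x a) (rm x a)) \<le> norm (st a) * norm (ip x x) * norm a"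
    by (metis norm_mult_ineq mult_right_mono norm_ge_zero order_trans)
  then have "(norm (rm x a))\<^sup>2 \<le> (norm x * norm a)\<^sup>2"
    by (simp add: norm_ip norm_st power2_eq_square mult_ac)
  then show ?thesis by (simp add: power2_le_iff_abs_le)
qed

lemma norm_scM: "norm (scM c x) = cmod c * norm x"
proof -
  have "ip (scM c x) (scM c x) = sc (c * cnj c) (ip x x)" by (simp add: ip_scM ip_scM1 sc_mult)
  then have "norm (ip (scM c x) (scM c x)) = cmod (c * cnj c) * norm (ip x x)" by (simp add: sc_norm)
  then have "norm (ip (scM c x) (scM c x)) = (cmod c)\<^sup>2 * norm (ip x x)" by (simp add: norm_mult power2_eq_square)
  then have "(norm (scM c x))\<^sup>2 = (cmod c * norm x)\<^sup>2" by (simp add: norm_ip power_mult_distrib)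
  then show ?thesis by (simp add: power2_eq_iff_nonneg)
qed

lemma ip_polar_re: "norm (ip x y + ip y x) \<le> (norm x + norm y)\<^sup>2"
proof -
  have eq: "ip (x+y) (x+y) - ip (x-y) (x-y) = 2 *\<^sub>R (ip x y + ip y x)"
    by (simp add: ip_add ip_add1 ip_diff1 ip_diff2 algebra_simps scaleR_2)
  have "norm (ip (x+y) (x+y) - ip (x-y) (x-y)) \<le> norm (ip (x+y) (x+y)) + norm (ip (x-y) (x-y))"
    by (rule norm_triangle_ineq4)
  also have "\<dots> = (norm (x+y))\<^sup>2 + (norm (x-y))\<^sup>2" by (simp add: norm_ip)
  also have "\<dots> \<le> (norm x + norm y)\<^sup>2 + (norm x + norm y)\<^sup>2"
    by (intro add_mono power_mono norm_triangle_ineq norm_triangle_ineq4) auto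
  finally have "2 * norm (ip x y + ip y x) \<le> 2 * (norm x + norm y)\<^sup>2" using eq by simp
  then show ?thesis by simp
qed

lemma ip_polar_im: "norm (ip x y - ip y x) \<le> (norm x + norm y)\<^sup>2"
proof -
  have m: "sc (- \<i>) v = - sc \<i> v" for v
  proof -
    have "sc (- \<i>) v = sc (complex_of_real (-1) * \<i>) v" by simp
    also have "\<dots> = - sc \<i> v" by (simp only: sc_mult sc_real) simp
    finally show ?thesis .
  qed
  have "ip x (scM \<i> y) + ip (scM \<i> y) x = sc \<i> (ip x y - ip y x)"
    by (simp add: ip_scM ip_scM1 m sc_diff)
  then have "norm (ip x y - ip y x) = norm (ip x (scM \<i> y) + ip (scM \<i> y) x)" by (simp add: sc_norm)
  also have "\<dots> \<le> (norm x + norm (scM \<i> y))\<^sup>2" by (rule ip_polar_re)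
  also have "\<dots> = (norm x + norm y)\<^sup>2" by (simp add: norm_scM)
  finally show ?thesis .
qed

lemma ip_bound0: "norm (ip x y) \<le> (norm x + norm y)\<^sup>2"
proof -
  have "2 *\<^sub>R ip x y = (ip x y + ip y x) + (ip x y - ip y x)" by (simp add: scaleR_2)
  then have "2 * norm (ip x y) \<le> norm (ip x y + ip y x) + norm (ip x y - ip y x)"
    by (metis norm_scaleR norm_triangle_ineq abs_numeral)
  then show ?thesis using ip_polar_re[of x y] ip_polar_im[of x y] by simp
qed

lemma ip_bound: "norm (ip x y) \<le> 4 * norm x * norm y"
proof (cases "x = 0 \<or> y = 0")
  case True then show ?thesis by (auto simp: ip_zero1 ip_zero2)
next
  case False
  then have a: "norm x > 0" and b: "norm y > 0" by auto
  have "ip ((1/norm x) *\<^sub>R x) ((1/norm y) *\<^sub>R y) = (1/norm x) *\<^sub>R (1/norm y) *\<^sub>R ip x y"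
    by (simp add: ip_scaleR1 ip_scaleR2)
  then have "norm (ip x y) / (norm x * norm y) = norm (ip ((1/norm x) *\<^sub>R x) ((1/norm y) *\<^sub>R y))"
    using a b by simp
  also have "\<dots> \<le> (norm ((1/norm x) *\<^sub>R x) + norm ((1/norm y) *\<^sub>R y))\<^sup>2" by (rule ip_bound0)
  also have "\<dots> = 4" using a b by simp
  finally show ?thesis using a b by (simp add: divide_le_eq mult.assoc)
qed

lemma ip_bound': "norm (ip x y) \<le> (4 * norm x) * norm y" using ip_bound by (simp add: mult.assoc)

lemma tri3: "norm (a - b - c) \<le> norm a + norm b + norm c" for a b c :: "'v::real_normed_vector"
  by (metis add_mono norm_triangle_ineq4 order_trans order_refl)

lemma scM_sum: "scM c (\<Sum>i<(n::nat). f i) = (\<Sum>i<(n::nat). scM c (f i))"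
  by (induction n) (simp_all add: scM_zero scM_add)
lemma rm_sum: "rm (\<Sum>i<(n::nat). f i) a = (\<Sum>i<(n::nat). rm (f i) a)"
  by (induction n) (simp_all add: rm_zero1 rm_add1)
lemma scM_comm: "scM c (scM d v) = scM d (scM c v)"
  by (metis scM_mult mult.commute)

definition theta :: "'m \<Rightarrow> 'm \<Rightarrow> 'm \<Rightarrow> 'm" where "theta x y = (\<lambda>z. rm x (ip y z))"

definition mlin :: "('m \<Rightarrow> 'm) \<Rightarrow> bool" where
  "mlin T \<longleftrightarrow> (\<forall>z w. T (z + w) = T z + T w) \<and> (\<forall>c z. T (scM c z) = scM c (T z)) \<and>
     (\<forall>z a. T (rm z a) = rm (T z) a)"

lemma mlin_zero: "mlin T \<Longrightarrow> T 0 = 0"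
  unfolding mlin_def by (metis add_cancel_right_right add_0)
lemma mlin_diff: "mlin T \<Longrightarrow> T (u - v) = T u - T v"
  unfolding mlin_def by (metis add_diff_cancel diff_add_cancel)
lemma mlin_sum: "mlin T \<Longrightarrow> T (\<Sum>i<(n::nat). f i) = (\<Sum>i<(n::nat). T (f i))"
  by (induction n) (simp_all add: mlin_zero, simp add: mlin_def)

lemma spanI: "F = (\<lambda>z. \<Sum>i<(n::nat). scM (c i) (rm (x i) (ip (y i) z))) \<Longrightarrow> F \<in> theta_span scM rm ip"
  unfolding theta_span_def by (rule CollectI, (rule exI)+, assumption)

lemma span_rep: "F \<in> theta_span scM rm ip \<Longrightarrow>
   \<exists>n c x y. F = (\<lambda>z. \<Sum>i<(n::nat). scM (c i) (rm (x i) (ip (y i) z)))"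
  unfolding theta_span_def by blast

lemma span_mlin:
  assumes "F \<in> theta_span scM rm ip" shows "mlin F"
proof -
  obtain n c x y where F: "F = (\<lambda>z. \<Sum>i<(n::nat). scM (c i) (rm (x i) (ip (y i) z)))"
    using span_rep[OF assms] by blast
  have 1: "F (z + w) = F z + F w" for z w
    by (simp add: F ip_add rm_add2 scM_add sum.distrib)
  have 2: "F (scM d z) = scM d (F z)" for d z
    by (simp add: F ip_scM rm_sc scM_sum) (metis scM_comm)
  have 3: "F (rm z a) = rm (F z) a" for z a
    by (simp add: F ip_rm rm_mult rm_scM rm_sum)
  show ?thesis unfolding mlin_def using 1 2 3 by blast
qed

lemma span_bounded:
  assumes "F \<in> theta_span scM rm ip" shows "\<exists>B. \<forall>z. norm (F z) \<le> B * norm z"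
proof -
  obtain n c x y where F: "F = (\<lambda>z. \<Sum>i<(n::nat). scM (c i) (rm (x i) (ip (y i) z)))"
    using span_rep[OF assms] by blast
  have "norm (F z) \<le> (\<Sum>i<(n::nat). cmod (c i) * (norm (x i) * (4 * norm (y i)))) * norm z" for z
  proof -
    have "norm (F z) \<le> (\<Sum>i<(n::nat). norm (scM (c i) (rm (x i) (ip (y i) z))))"
      unfolding F by (rule norm_sum)
    also have "\<dots> \<le> (\<Sum>i<(n::nat). cmod (c i) * (norm (x i) * (4 * norm (y i))) * norm z)"
    proof (rule sum_mono)
      fix i
      have "norm (rm (x i) (ip (y i) z)) \<le> norm (x i) * norm (ip (y i) z)" by (rule norm_rm)
      also have "\<dots> \<le> norm (x i) * (4 * norm (y i) * norm z)"
        by (intro mult_left_mono ip_bound) auto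
      finally show "norm (scM (c i) (rm (x i) (ip (y i) z))) \<le> cmod (c i) * (norm (x i) * (4 * norm (y i))) * norm z"
        by (simp add: norm_scM mult_left_mono mult.assoc)
    qed
    also have "\<dots> = (\<Sum>i<(n::nat). cmod (c i) * (norm (x i) * (4 * norm (y i)))) * norm z"
      by (simp add: sum_distrib_right)
    finally show ?thesis .
  qed
  then show ?thesis by blast
qed

lemma compact_rep:
  assumes "T \<in> compact_ops scM rm ip" "e > 0"
  obtains F where "F \<in> theta_span scM rm ip" "\<And>z. norm (T z - F z) \<le> e * norm z"
  using assms unfolding compact_ops_def opdist_le_def by blast

lemma compact_mlin:
  assumes T: "T \<in> compact_ops scM rm ip" shows "mlin T"
proof -
  have 1: "T (z + w) = T z + T w" for z w
  proof -
    have "T (z + w) - (T z + T w) = 0"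
    proof (rule small_zero[where C = "norm (z+w) + norm z + norm w"])
      fix e :: real assume "e > 0"
      then obtain F where F: "F \<in> theta_span scM rm ip" "\<And>z. norm (T z - F z) \<le> e * norm z"
        using compact_rep[OF T] by blast
      have "F (z + w) = F z + F w" using span_mlin[OF F(1)] unfolding mlin_def by blast
      then have "T (z + w) - (T z + T w) = (T (z+w) - F (z+w)) - (T z - F z) - (T w - F w)"
        by (simp add: algebra_simps)
      then have "norm (T (z + w) - (T z + T w)) \<le> norm (T (z+w) - F (z+w)) + norm (T z - F z) + norm (T w - F w)"
        by (metis tri3)
      also have "\<dots> \<le> e * norm (z+w) + e * norm z + e * norm w" by (intro add_mono F(2))
      finally show "norm (T (z + w) - (T z + T w)) \<le> e * (norm (z+w) + norm z + norm w)"
        by (simp add: algebra_simps)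
  
    qed
    then show ?thesis by simp
  qed
  have 2: "T (scM c z) = scM c (T z)" for c z
  proof -
    have "T (scM c z) - (scM c (T z)) = 0"
    proof (rule small_zero[where C = "2 * cmod c * norm z"])
      fix e :: real assume "e > 0"
      then obtain F where F: "F \<in> theta_span scM rm ip" "\<And>z. norm (T z - F z) \<le> e * norm z"
        using compact_rep[OF T] by blast
      have "F (scM c z) = scM c (F z)" using span_mlin[OF F(1)] unfolding mlin_def by blast
      then have "T (scM c z) - scM c (T z) = (T (scM c z) - F (scM c z)) - scM c (T z - F z) - 0"
        by (simp add: scM_diff)
      then have "norm (T (scM c z) - scM c (T z)) \<le> norm (T (scM c z) - F (scM c z)) + norm (scM c (T z - F z)) + norm (0::'m)"
        by (metis tri3)
      also have "\<dots> \<le> e * (cmod c * norm z) + cmod c * (e * norm z)"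
        using F(2)[of "scM c z"] mult_left_mono[OF F(2)[of z] norm_ge_zero[of c]] by (simp add: norm_scM mult_ac)
      finally show "norm (T (scM c z) - scM c (T z)) \<le> e * (2 * cmod c * norm z)"
        by (simp add: algebra_simps)
  
    qed
    then show ?thesis by simp
  qed
  have 3: "T (rm z a) = rm (T z) a" for z a
  proof -
    have "T (rm z a) - (rm (T z) a) = 0"
    proof (rule small_zero[where C = "2 * norm z * norm a"])
      fix e :: real assume "e > 0"
      then obtain F where F: "F \<in> theta_span scM rm ip" "\<And>z. norm (T z - F z) \<le> e * norm z"
        using compact_rep[OF T] by blast
      have "F (rm z a) = rm (F z) a" using span_mlin[OF F(1)] unfolding mlin_def by blast
      then have "T (rm z a) - rm (T z) a = (T (rm z a) - F (rm z a)) - rm (T z - F z) a - 0"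
        by (simp add: rm_diff1)
      then have "norm (T (rm z a) - rm (T z) a) \<le> norm (T (rm z a) - F (rm z a)) + norm (rm (T z - F z) a) + norm (0::'m)"
        by (metis tri3)
      also have "\<dots> \<le> e * (norm z * norm a) + (e * norm z) * norm a"
      proof -
        have "norm (T (rm z a) - F (rm z a)) \<le> e * (norm z * norm a)"
          using F(2)[of "rm z a"] norm_rm[of z a] \<open>e > 0\<close>
          by (meson mult_left_mono less_imp_le order_trans)
        moreover have "norm (rm (T z - F z) a) \<le> (e * norm z) * norm a"
          using norm_rm[of "T z - F z" a] F(2)[of z]
          by (meson mult_right_mono norm_ge_zero order_trans)
        ultimately have "norm (T (rm z a) - F (rm z a)) + norm (rm (T z - F z) a) \<le> e * (norm z * norm a) + (e * norm z) * norm a"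
          by (rule add_mono)
        then show ?thesis by (metis add_0_right norm_zero)
      qed
      finally show "norm (T (rm z a) - rm (T z) a) \<le> e * (2 * norm z * norm a)"
        by (simp add: algebra_simps)
  
    qed
    then show ?thesis by simp
  qed
  show ?thesis unfolding mlin_def using 1 2 3 by blast
qed

lemma compact_bounded:
  assumes T: "T \<in> compact_ops scM rm ip" shows "\<exists>B\<ge>0. \<forall>z. norm (T z) \<le> B * norm z"
proof -
  obtain F where F: "F \<in> theta_span scM rm ip" "\<And>z. norm (T z - F z) \<le> 1 * norm z"
    using compact_rep[OF T, of 1] by auto
  obtain B where B: "\<And>z. norm (F z) \<le> B * norm z" using span_bounded[OF F(1)] by blast
  have "norm (T z) \<le> (\<bar>B\<bar> + 1) * norm z" for z
  proof -
    have "norm (T z) \<le> norm (F z) + norm (T z - F z)" by (metis norm_triangle_sub add.commute)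
    also have "\<dots> \<le> B * norm z + 1 * norm z" by (intro add_mono B F(2))
    also have "\<dots> \<le> (\<bar>B\<bar> + 1) * norm z" by (simp add: algebra_simps mult_right_mono)
    finally show ?thesis .
  qed
  then show ?thesis by (intro exI[of _ "\<bar>B\<bar> + 1"]) auto
qed

lemma span_compact: "F \<in> theta_span scM rm ip \<Longrightarrow> F \<in> compact_ops scM rm ip"
  unfolding compact_ops_def opdist_le_def by force

lemma theta_span: "theta x y \<in> theta_span scM rm ip"
proof -
  have "theta x y = (\<lambda>z. \<Sum>i<(1::nat). scM ((\<lambda>_. 1) i) (rm ((\<lambda>_. x) i) (ip ((\<lambda>_. y) i) z)))"
    by (simp add: theta_def scM_one)
  then show ?thesis by (rule spanI)
qed

lemma theta_compact: "theta x y \<in> compact_ops scM rm ip"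
  by (rule span_compact[OF theta_span])

lemma zero_span: "(\<lambda>_. 0) \<in> theta_span scM rm ip"
proof -
  have "(\<lambda>_. 0) = (\<lambda>z. \<Sum>i<(0::nat). scM ((\<lambda>_. 1) i) (rm ((\<lambda>_. 0) i) (ip ((\<lambda>_. 0) i) z)))"
    by simp
  then show ?thesis by (rule spanI)
qed

lemma zero_compact: "(\<lambda>_. 0) \<in> compact_ops scM rm ip"
  by (rule span_compact[OF zero_span])

lemma span_add:
  assumes "F \<in> theta_span scM rm ip" "G \<in> theta_span scM rm ip"
  shows "(\<lambda>z. F z + G z) \<in> theta_span scM rm ip"
proof -
  obtain n c x y where F: "F = (\<lambda>z. \<Sum>i<(n::nat). scM (c i) (rm (x i) (ip (y i) z)))"
    using span_rep[OF assms(1)] by blast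
  obtain m d u v where G: "G = (\<lambda>z. \<Sum>i<(m::nat). scM (d i) (rm (u i) (ip (v i) z)))"
    using span_rep[OF assms(2)] by blast
  define C where "C i = (if i < n then c i else d (i - n))" for i
  define X where "X i = (if i < n then x i else u (i - n))" for i
  define Y where "Y i = (if i < n then y i else v (i - n))" for i
  have "(\<lambda>z. F z + G z) = (\<lambda>z. \<Sum>i<n+m. scM (C i) (rm (X i) (ip (Y i) z)))"
  proof
    fix z
    have "(\<Sum>i<n+m. scM (C i) (rm (X i) (ip (Y i) z))) =
      (\<Sum>i<(n::nat). scM (C i) (rm (X i) (ip (Y i) z))) + (\<Sum>i<(m::nat). scM (C (n+i)) (rm (X (n+i)) (ip (Y (n+i)) z)))"
      by (rule sum_split_nat)
    also have "(\<Sum>i<(n::nat). scM (C i) (rm (X i) (ip (Y i) z))) = F z"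
      unfolding F by (rule sum.cong) (simp_all add: C_def X_def Y_def)
    also have "(\<Sum>i<(m::nat). scM (C (n+i)) (rm (X (n+i)) (ip (Y (n+i)) z))) = G z"
      unfolding G by (simp add: C_def X_def Y_def)
    finally show "F z + G z = (\<Sum>i<n+m. scM (C i) (rm (X i) (ip (Y i) z)))" by simp
  qed
  then show ?thesis unfolding theta_span_def by blast
qed

lemma span_scM:
  assumes "F \<in> theta_span scM rm ip"
  shows "(\<lambda>z. scM a (F z)) \<in> theta_span scM rm ip"
proof -
  obtain n c x y where F: "F = (\<lambda>z. \<Sum>i<(n::nat). scM (c i) (rm (x i) (ip (y i) z)))"
    using span_rep[OF assms(1)] by blast
  have "(\<lambda>z. scM a (F z)) = (\<lambda>z. \<Sum>i<(n::nat). scM (a * c i) (rm (x i) (ip (y i) z)))"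
    by (simp add: F scM_sum scM_mult)
  then show ?thesis by (rule spanI)
qed

lemma span_comp:
  assumes "mlin T" "F \<in> theta_span scM rm ip"
  shows "T \<circ> F \<in> theta_span scM rm ip"
proof -
  obtain n c x y where F: "F = (\<lambda>z. \<Sum>i<(n::nat). scM (c i) (rm (x i) (ip (y i) z)))"
    using span_rep[OF assms(2)] by blast
  have "T \<circ> F = (\<lambda>z. \<Sum>i<(n::nat). scM (c i) (rm (T (x i)) (ip (y i) z)))"
    using assms(1) by (simp add: F o_def mlin_sum) (simp add: mlin_def)
  then show ?thesis by (rule spanI)
qed

lemma compact_add:
  assumes T: "T \<in> compact_ops scM rm ip" and S: "S \<in> compact_ops scM rm ip"
  shows "(\<lambda>z. T z + S z) \<in> compact_ops scM rm ip"
  unfolding compact_ops_def opdist_le_def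
proof (intro CollectI allI impI)
  fix e :: real assume e: "e > 0"
  obtain F where F: "F \<in> theta_span scM rm ip" "\<And>z. norm (T z - F z) \<le> (e/2) * norm z"
    using compact_rep[OF T, of "e/2"] e by auto
  obtain G where G: "G \<in> theta_span scM rm ip" "\<And>z. norm (S z - G z) \<le> (e/2) * norm z"
    using compact_rep[OF S, of "e/2"] e by auto
  have "norm (T z + S z - (F z + G z)) \<le> e * norm z" for z
  proof -
    have "T z + S z - (F z + G z) = (T z - F z) + (S z - G z)" by simp
    then have "norm (T z + S z - (F z + G z)) \<le> norm (T z - F z) + norm (S z - G z)"
      by (metis norm_triangle_ineq)
    also have "\<dots> \<le> (e/2) * norm z + (e/2) * norm z" by (intro add_mono F(2) G(2))
    finally show ?thesis by simp
  qed
  then show "\<exists>H\<in>theta_span scM rm ip. \<forall>z. norm (T z + S z - H z) \<le> e * norm z"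
    using span_add[OF F(1) G(1)] by (intro bexI[of _ "\<lambda>z. F z + G z"]) auto
qed

lemma compact_scM:
  assumes T: "T \<in> compact_ops scM rm ip"
  shows "(\<lambda>z. scM a (T z)) \<in> compact_ops scM rm ip"
  unfolding compact_ops_def opdist_le_def
proof (intro CollectI allI impI)
  fix e :: real assume e: "e > 0"
  have "cmod a + 1 > 0" by (smt (verit) norm_ge_zero)
  then have d: "e / (cmod a + 1) > 0" using e by simp
  obtain F where F: "F \<in> theta_span scM rm ip" "\<And>z. norm (T z - F z) \<le> (e / (cmod a + 1)) * norm z"
    using compact_rep[OF T d] by blast
  have "norm (scM a (T z) - scM a (F z)) \<le> e * norm z" for z
  proof -
    have "norm (scM a (T z) - scM a (F z)) = cmod a * norm (T z - F z)" by (simp add: scM_diff[symmetric] norm_scM)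
    also have "\<dots> \<le> cmod a * ((e / (cmod a + 1)) * norm z)" by (intro mult_left_mono F(2)) auto
    also have "\<dots> \<le> e * norm z"
    proof -
      have "cmod a * (e / (cmod a + 1)) \<le> e" using e by (simp add: field_simps add_pos_nonneg)
      then show ?thesis by (metis mult.assoc mult_right_mono norm_ge_zero)
    qed
    finally show ?thesis .
  qed
  then show "\<exists>H\<in>theta_span scM rm ip. \<forall>z. norm (scM a (T z) - H z) \<le> e * norm z"
    using span_scM[OF F(1)] by (intro bexI[of _ "\<lambda>z. scM a (F z)"]) auto
qed

lemma compact_comp:
  assumes T: "T \<in> compact_ops scM rm ip" and S: "S \<in> compact_ops scM rm ip"
  shows "T \<circ> S \<in> compact_ops scM rm ip"
  unfolding compact_ops_def opdist_le_def
proof (intro CollectI allI impI)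
  fix e :: real assume e: "e > 0"
  obtain B where B: "B \<ge> 0" "\<And>z. norm (T z) \<le> B * norm z" using compact_bounded[OF T] by blast
  have d: "e / (B + 1) > 0" using e B by simp
  obtain G where G: "G \<in> theta_span scM rm ip" "\<And>z. norm (S z - G z) \<le> (e / (B + 1)) * norm z"
    using compact_rep[OF S d] by blast
  have ml: "mlin T" by (rule compact_mlin[OF T])
  have "norm ((T \<circ> S) z - (T \<circ> G) z) \<le> e * norm z" for z
  proof -
    have "norm ((T \<circ> S) z - (T \<circ> G) z) = norm (T (S z - G z))" by (simp add: mlin_diff[OF ml])
    also have "\<dots> \<le> B * norm (S z - G z)" by (rule B(2))
    also have "\<dots> \<le> B * ((e / (B + 1)) * norm z)" by (intro mult_left_mono G(2) B(1))
    also have "\<dots> \<le> e * norm z"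
    proof -
      have "B * (e / (B + 1)) \<le> e" using e B by (simp add: field_simps)
      then show ?thesis by (metis mult.assoc mult_right_mono norm_ge_zero)
    qed
    finally show ?thesis .
  qed
  then show "\<exists>H\<in>theta_span scM rm ip. \<forall>z. norm ((T \<circ> S) z - H z) \<le> e * norm z"
    using span_comp[OF ml G(1)] by (intro bexI[of _ "T \<circ> G"]) auto
qed

lemma comp_theta: "mlin T \<Longrightarrow> T \<circ> theta z y = theta (T z) y"
  unfolding theta_def mlin_def by (simp add: o_def)

lemma theta_nz:
  assumes "x \<noteq> 0" shows "theta x x \<noteq> (\<lambda>_. 0)"
proof
  assume "theta x x = (\<lambda>_. 0)"
  then have "rm x (ip x x) = 0" unfolding theta_def by metis
  then have "ip x x * ip x x = 0" using ip_rm[of x x "ip x x"] by (simp add: ip_zero2)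
  then have "norm (st (ip x x) * ip x x) = 0" by (simp add: ip_self_adj)
  then have "ip x x = 0" by (simp add: cstar)
  then show False using ip_zero assms by blast
qed

lemma theta_rm: "theta (rm x a) y = theta x (rm y (st a))"
  unfolding theta_def by (simp add: ip_rm1 st_st rm_mult)

lemma dir1:
  assumes N: "closed_submodule scM rm N" and te: "top_essential_submodule scM rm N"
  shows "top_essential_right_ideal scM rm ip (J_of scM rm ip N)"
  unfolding top_essential_right_ideal_def
proof (intro allI impI)
  fix K assume "closed_right_ideal scM rm ip K \<and> K \<noteq> {\<lambda>_. 0}"
  then have K: "closed_right_ideal scM rm ip K" and Kne: "K \<noteq> {\<lambda>_. 0}" by auto
  have Kc: "K \<subseteq> compact_ops scM rm ip" using K unfolding closed_right_ideal_def by auto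
  have K0: "(\<lambda>_. 0) \<in> K" using K unfolding closed_right_ideal_def by auto
  have Kadd: "\<And>T S. T \<in> K \<Longrightarrow> S \<in> K \<Longrightarrow> (\<lambda>z. T z + S z) \<in> K"
    using K unfolding closed_right_ideal_def by auto
  have Ksc: "\<And>c T. T \<in> K \<Longrightarrow> (\<lambda>z. scM c (T z)) \<in> K"
    using K unfolding closed_right_ideal_def by auto
  have Kcomp: "\<And>T S. T \<in> K \<Longrightarrow> S \<in> compact_ops scM rm ip \<Longrightarrow> T \<circ> S \<in> K"
    using K unfolding closed_right_ideal_def by auto
  have Kcl: "\<And>T. T \<in> compact_ops scM rm ip \<Longrightarrow> (\<forall>e>0. \<exists>S\<in>K. opdist_le T S e) \<Longrightarrow> T \<in> K"
    using K unfolding closed_right_ideal_def by auto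
  obtain T where T: "T \<in> K" "T \<noteq> (\<lambda>_. 0)" using Kne K0 by blast
  then obtain z where z: "T z \<noteq> 0" by (metis ext)
  define K' where "K' = {x. \<forall>y. theta x y \<in> K}"
  have cl: "closed K'"
    unfolding closure_subset_eq[symmetric]
  proof
    fix x assume x: "x \<in> closure K'"
    show "x \<in> K'" unfolding K'_def
    proof (intro CollectI allI)
      fix y
      show "theta x y \<in> K"
      proof (rule Kcl[OF theta_compact], intro allI impI)
        fix e :: real assume e: "e > 0"
        define d where "d = e / (4 * norm y + 1)"
        have d: "d > 0" unfolding d_def using e by (simp add: add_nonneg_pos)
        obtain x' where x': "x' \<in> K'" "dist x' x < d" using x d unfolding closure_approachable by blast
        have "norm (theta x y w - theta x' y w) \<le> e * norm w" for w
        proof -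
          have "theta x y w - theta x' y w = rm (x - x') (ip y w)" by (simp add: theta_def rm_diff1)
          then have "norm (theta x y w - theta x' y w) \<le> norm (x - x') * norm (ip y w)"
            by (simp add: norm_rm)
          also have "\<dots> \<le> d * ((4 * norm y) * norm w)"
            using x'(2) ip_bound'[of y w] d
            by (intro mult_mono) (auto simp: dist_norm norm_minus_commute)
          also have "\<dots> = (d * (4 * norm y)) * norm w" by simp
          also have "\<dots> \<le> e * norm w"
          proof (rule mult_right_mono)
            have "d * (4 * norm y) = e * (4 * norm y) / (4 * norm y + 1)" unfolding d_def by simp
            also have "\<dots> \<le> e"
            proof -
              have p: "4 * norm y + 1 > 0" using norm_ge_zero[of y] by linarith
              show ?thesis using e by (subst pos_divide_le_eq[OF p]) (simp add: algebra_simps)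
            qed
            finally show "d * (4 * norm y) \<le> e" .
          qed simp
          finally show ?thesis .
        qed
        then show "\<exists>S\<in>K. opdist_le (theta x y) S e"
          using x'(1) unfolding K'_def opdist_le_def by blast
      qed
    qed
  qed
  have zK: "0 \<in> K'" unfolding K'_def
  proof (intro CollectI allI)
    fix y show "theta 0 y \<in> K" using K0 by (simp add: theta_def rm_zero1)
  qed
  have sub: "closed_submodule scM rm K'"
    unfolding closed_submodule_def
  proof (intro conjI ballI allI cl zK)
    fix x x' assume "x \<in> K'" "x' \<in> K'"
    then show "x + x' \<in> K'" unfolding K'_def
      using Kadd by (simp add: theta_def rm_add1)
  next
    fix c x assume "x \<in> K'"
    then show "scM c x \<in> K'" unfolding K'_def
      using Ksc by (simp add: theta_def rm_scM)
  next
    fix x a assume "x \<in> K'"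
    then show "rm x a \<in> K'" unfolding K'_def by (simp add: theta_rm)
  qed
  have TzK: "T z \<in> K'" unfolding K'_def
  proof (intro CollectI allI)
    fix y
    have "T \<circ> theta z y \<in> K" by (rule Kcomp[OF T(1) theta_compact])
    then show "theta (T z) y \<in> K" using comp_theta[OF compact_mlin] T(1) Kc by auto
  qed
  have "K' \<noteq> {0}" using TzK z by blast
  then have "N \<inter> K' \<noteq> {0}" using te sub unfolding top_essential_submodule_def by blast
  moreover have "0 \<in> N" using N unfolding closed_submodule_def by blast
  ultimately obtain x where x: "x \<in> N" "x \<in> K'" "x \<noteq> 0" using zK by blast
  have tK: "theta x x \<in> K" using x(2) unfolding K'_def by blast
  have tJ: "theta x x \<in> J_of scM rm ip N"
    unfolding J_of_def using theta_compact x(1) N unfolding closed_submodule_def theta_def by auto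
  show "J_of scM rm ip N \<inter> K \<noteq> {\<lambda>_. 0}" using tK tJ theta_nz[OF x(3)] by blast
qed

lemma dir2:
  assumes N: "closed_submodule scM rm N" and tj: "top_essential_right_ideal scM rm ip (J_of scM rm ip N)"
  shows "top_essential_submodule scM rm N"
  unfolding top_essential_submodule_def
proof (intro allI impI)
  fix K assume "closed_submodule scM rm K \<and> K \<noteq> {0}"
  then have K: "closed_submodule scM rm K" and Kne: "K \<noteq> {0}" by auto
  have Kcl: "closed K" and K0: "0 \<in> K" and Kadd: "\<And>x y. x \<in> K \<Longrightarrow> y \<in> K \<Longrightarrow> x + y \<in> K"
    and Ksc: "\<And>c x. x \<in> K \<Longrightarrow> scM c x \<in> K" and Krm: "\<And>x a. x \<in> K \<Longrightarrow> rm x a \<in> K"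
    using K unfolding closed_submodule_def by auto
  obtain x where x: "x \<in> K" "x \<noteq> 0" using Kne K0 by blast
  define I where "I = {T \<in> compact_ops scM rm ip. range T \<subseteq> K}"
  have I: "closed_right_ideal scM rm ip I"
    unfolding closed_right_ideal_def
  proof (intro conjI ballI allI impI)
    show "I \<subseteq> compact_ops scM rm ip" unfolding I_def by auto
    show "(\<lambda>_. 0) \<in> I" unfolding I_def using zero_compact K0 by auto
  next
    fix T S assume "T \<in> I" "S \<in> I"
    then show "(\<lambda>z. T z + S z) \<in> I" unfolding I_def using compact_add Kadd by (auto simp: image_subset_iff)
  next
    fix c T assume "T \<in> I"
    then show "(\<lambda>z. scM c (T z)) \<in> I" unfolding I_def using compact_scM Ksc by auto
  next
    fix T S assume "T \<in> I" "S \<in> compact_ops scM rm ip"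
    then show "T \<circ> S \<in> I" unfolding I_def using compact_comp by auto
  next
    fix T assume T: "T \<in> compact_ops scM rm ip" and ap: "\<forall>e>0. \<exists>S\<in>I. opdist_le T S e"
    have "T z \<in> K" for z
    proof -
      have "\<forall>e>0. \<exists>y\<in>K. dist y (T z) < e"
      proof (intro allI impI)
        fix e :: real assume e: "e > 0"
        define d where "d = e / (norm z + 1)"
        have d: "d > 0" unfolding d_def using e by (simp add: add_nonneg_pos)
        obtain S where S: "S \<in> I" "opdist_le T S d" using ap d by blast
        have "dist (S z) (T z) = norm (T z - S z)" by (simp add: dist_norm norm_minus_commute)
        also have "\<dots> \<le> d * norm z" using S(2) unfolding opdist_le_def by blast
        also have "\<dots> < e"
        proof -
          have "d * norm z = e * norm z / (norm z + 1)" unfolding d_def by simp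
          also have "\<dots> < e"
          proof -
            have p: "norm z + 1 > 0" using norm_ge_zero[of z] by linarith
            show ?thesis using e by (subst pos_divide_less_eq[OF p]) (simp add: algebra_simps)
          qed
          finally show ?thesis .
        qed
        finally show "\<exists>y\<in>K. dist y (T z) < e" using S(1) unfolding I_def by blast
      qed
      then show ?thesis using closed_approachable[OF Kcl] by blast
    qed
    then show "T \<in> I" unfolding I_def using T by auto
  qed
  have tI: "theta x x \<in> I" unfolding I_def using theta_compact Krm x(1) by (auto simp: theta_def)
  have "I \<noteq> {\<lambda>_. 0}" using tI theta_nz[OF x(2)] by blast
  then have "J_of scM rm ip N \<inter> I \<noteq> {\<lambda>_. 0}" using tj I unfolding top_essential_right_ideal_def by blast
  moreover have "(\<lambda>_. 0) \<in> J_of scM rm ip N \<inter> I"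
    unfolding J_of_def I_def using zero_compact K0 N unfolding closed_submodule_def by auto
  ultimately obtain T where T: "T \<in> J_of scM rm ip N" "T \<in> I" "T \<noteq> (\<lambda>_. 0)" by blast
  then obtain z where z: "T z \<noteq> 0" by (metis ext)
  have "T z \<in> N" using T(1) unfolding J_of_def by auto
  moreover have "T z \<in> K" using T(2) unfolding I_def by auto
  ultimately show "N \<inter> K \<noteq> {0}" using z by blast
qed

end

theorem mainTheorem2:
  fixes sc :: "complex \<Rightarrow> 'a::{real_normed_algebra,banach} \<Rightarrow> 'a"
    and st :: "'a \<Rightarrow> 'a"
    and scM :: "complex \<Rightarrow> 'm::banach \<Rightarrow> 'm"
    and rm :: "'m \<Rightarrow> 'a \<Rightarrow> 'm"
    and ip :: "'m \<Rightarrow> 'm \<Rightarrow> 'a"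
    and N :: "'m set"
  assumes "hilbert_module sc st scM rm ip"
    and "closed_submodule scM rm N"
  shows "top_essential_submodule scM rm N \<longleftrightarrow>
         top_essential_right_ideal scM rm ip (J_of scM rm ip N)"
proof -
  interpret hm sc st scM rm ip by (rule hm.intro) (rule assms(1))
  show ?thesis using dir1[OF assms(2)] dir2[OF assms(2)] by blast
qed

end
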